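(* Consider the ASYMM algorithm described in the context, and let $t_1,t_2,\dots$ be the increasing subsequence of universal iterations at which a multiplier update (task T2) is performed, with $t_1$ the first such iteration. Then, for every $k=0,1,\dots$, between $t_{kN+1}$ and $t_{(k+1)N+1}$ every node performs task T1 at least once.
   Context: Problem: minimize $\sum_{i=1}^N f_i(x)$ over $x\in\mathbb{R}^n$ subject to $h_i(x)=0$ and $g_i(x)\le 0$ for $i=1,\dots,N$, with $f_i,h_i,g_i:\mathbb{R}^n\to\mathbb{R}$ private to node $i$. The nodes communicate over a fixed, undirected, connected graph $\mathcal{G}=(\mathcal{V},\mathcal{E})$, $\mathcal{V}=\{1,\dots,N\}$, with diameter $d_G$; $\mathcal{N}_i=\{j:(i,j)\in\mathcal{E}\}\cup\{i\}$ and $d_i=|\mathcal{N}_i|$. With multipliers $\nu_{ij}\in\mathbb{R}^n$, $\lambda_i,\mu_i\in\mathbb{R}$ and positive penalty parameters $\rho_{ij},\rho_{E_i},\rho_{I_i}$, the local Augmented Lagrangian of node $i$ is $\tilde{\mathcal{L}}_i=f_i(x_i)+\sum_{j\in\mathcal{N}_i\setminus\{i\}}[x_i^\top(\nu_{ij}-\nu_{ji})+\frac{\rho_{ij}+\rho_{ji}}{2}\|x_i-x_j\|^2]+\lambda_ih_i(x_i)+\frac{\rho_{E_i}}{2}\|h_i(x_i)\|^2+\frac{1}{2\rho_{I_i}}(\max\{0,\mu_i+\rho_{I_i}g_i(x_i)\}^2-\mu_i^2)$. Asynchronous model: each node alternates between IDLE mode (listening, possibly updating local variables) and AWAKE mode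 (computing and broadcasting), triggered by a local clock with waiting times $T_i\le\bar T_i$ for some constant $\bar T_i$; only one node can be awake at each time instant. Each awakening is an iteration $t\in\mathbb{N}$ of a universal discrete time, and $i_t$ is the node awake at iteration $t$. ASYMM: node $i$ stores $x_i$, copies $x_j$ of neighbors' variables, $\lambda_i,\mu_i,\nu_{ij}$ and received $\nu_{ji}$ ($j\in\mathcal{N}_i\setminus\{i\}$), penalties, a constant $L_i>0$, a tolerance $\epsilon_i$, a flag $M_{done}$ (initially $0$) and a matrix $S_i\in\{0,1\}^{d_G\times d_i}$ (initially zero) whose column $j|_i$ refers to neighbor $j$ and column $d_i$ to node $i$. When AWAKE: (T1) if $\prod_{l=1}^{d_i}S_i[d_G,l]\ne1$ and $M_{done}=0$: set $x_i\gets x_i-\frac1{L_i}\nabla_{x_i}\tilde{\mathcal{L}}_i$; if $\|\nabla_{x_i}\tilde{\mathcal{L}}_i\|\le\epsilon_i$ set $S_i[1,d_i]\gets1$; set $S_i[l,d_i]\gets\prod_{b=1}^{d_i}S_i[l-1,b]$ for $l=2,\dots,d_G$; broadcast $x_i$ and $S_i[:,d_i]$ to neighbors. (T2) Then, if $\prod_{l=1}^{d_i}S_i[d_G,l]=1$ and $M_{done}=0$: set $\nu_{ij}\gets\nu_{ij}+\rho_{ij}(x_i-x_j)$ for $j\in\mathcal{N}_i\setminus\{i\}$, $\lambda_i\gets\lambda_i+\rho_{E_i}h_i(x_i)$, $\mu_i\gets\max\{0,\mu_i+\rho_{I_i}g_i(x_i)\}$, update (non-decreasingly) $\rho_{E_i},\rho_{I_i},\rho_{ij}$,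 set $M_{done}\gets1$, broadcast $\nu_{ij},\rho_{ij}$ to each neighbor $j$. When IDLE: if $S_j[:,d_j]$ is received from a neighbor $j$ and no new $\nu_{ji}$ has already been received, set $S_i[l,j|_i]\gets S_j[l,d_j]$, $l=1,\dots,d_G$; if $\nu_{ji},\rho_{ji}$ are received from a neighbor $j$, set all entries of row $d_G$ of $S_i$ to $1$; if a new $x_j$ is received, update the local copy of $x_j$; if $M_{done}=1$ and new $\nu_{ji}$ has been received from all neighbors, set $M_{done}\gets0$, $S_i\gets0$ and update $\epsilon_i$. *)

theory Defs
  imports "HOL-Analysis.Analysis"
begin

text \<open>Nodes are the elements of a finite type 'v (so N = CARD('v)); the graph is given by
an edge relation E that is symmetric and irreflexive (undirected, no self loops).\<close>

definition undirected_graph :: "('v \<times> 'v) set \<Rightarrow> bool" where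
  "undirected_graph E \<longleftrightarrow> sym E \<and> irrefl E"

definition graph_connected :: "('v \<times> 'v) set \<Rightarrow> bool" where
  "graph_connected E \<longleftrightarrow> (\<forall>i j. (i, j) \<in> E\<^sup>*)"

definition nbrs :: "('v \<times> 'v) set \<Rightarrow> 'v \<Rightarrow> 'v set" where
  "nbrs E i = {j. (i, j) \<in> E}"

definition Nb :: "('v \<times> 'v) set \<Rightarrow> 'v \<Rightarrow> 'v set" where
  "Nb E i = insert i (nbrs E i)"

definition gdist :: "('v \<times> 'v) set \<Rightarrow> 'v \<Rightarrow> 'v \<Rightarrow> nat" where
  "gdist E i j = (LEAST k. (i, j) \<in> E ^^ k)"

definition diameter :: "('v::finite \<times> 'v) set \<Rightarrow> nat" where
  "diameter E = Max {gdist E i j | i j. True}"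

text \<open>The matrix S_i is represented as  S s i l c  (row l in 1..d_G, column indexed by the node
c in N_i; the column of node i itself is c = i); entries in {0,1} are represented by bool,
and a product of entries by a conjunction.
 nur s i j  is the copy at node i of nu_ji,  rhor s i j  the copy at i of rho_ji,
 xc s i j  the copy at i of x_j, and  nnu s i j  records that a new nu_ji has been received
(since the last reset of node i).\<close>

record ('v, 'a) astate =
  xv   :: "'v \<Rightarrow> 'a"
  xc   :: "'v \<Rightarrow> 'v \<Rightarrow> 'a"
  lam  :: "'v \<Rightarrow> real"
  mu   :: "'v \<Rightarrow> real"
  nu   :: "'v \<Rightarrow> 'v \<Rightarrow> 'a"
  nur  :: "'v \<Rightarrow> 'v \<Rightarrow> 'a"
  rE   :: "'v \<Rightarrow> real"
  rI   :: "'v \<Rightarrow> real"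
  rho  :: "'v \<Rightarrow> 'v \<Rightarrow> real"
  rhor :: "'v \<Rightarrow> 'v \<Rightarrow> real"
  eps  :: "'v \<Rightarrow> real"
  Md   :: "'v \<Rightarrow> bool"
  Sm   :: "'v \<Rightarrow> nat \<Rightarrow> 'v \<Rightarrow> bool"
  nnu  :: "'v \<Rightarrow> 'v \<Rightarrow> bool"

text \<open>Gradient of the local augmented Lagrangian of node i w.r.t. x_i, evaluated with the
local information of node i; gf, gh, gg are the gradients of f_i, h_i, g_i.\<close>
definition gradL ::
  "('v \<times> 'v) set \<Rightarrow> ('v \<Rightarrow> 'a \<Rightarrow> 'a) \<Rightarrow> ('v \<Rightarrow> 'a \<Rightarrow> 'a) \<Rightarrow> ('v \<Rightarrow> 'a \<Rightarrow> 'a)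
   \<Rightarrow> ('v \<Rightarrow> 'a::real_vector \<Rightarrow> real) \<Rightarrow> ('v \<Rightarrow> 'a \<Rightarrow> real) \<Rightarrow> ('v, 'a) astate \<Rightarrow> 'v \<Rightarrow> 'a" where
  "gradL E gf gh gg h g s i =
     gf i (xv s i)
     + (\<Sum>j\<in>nbrs E i. (nu s i j - nur s i j) + (rho s i j + rhor s i j) *\<^sub>R (xv s i - xc s i j))
     + (lam s i + rE s i * h i (xv s i)) *\<^sub>R gh i (xv s i)
     + max 0 (mu s i + rI s i * g i (xv s i)) *\<^sub>R gg i (xv s i)"

definition allrow :: "('v \<times> 'v) set \<Rightarrow> ('v, 'a) astate \<Rightarrow> 'v \<Rightarrow> nat \<Rightarrow> bool" where
  "allrow E s i l \<longleftrightarrow> (\<forall>c\<in>Nb E i. Sm s i l c)"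

fun newcol :: "(nat \<Rightarrow> 'v \<Rightarrow> bool) \<Rightarrow> 'v set \<Rightarrow> 'v \<Rightarrow> bool \<Rightarrow> nat \<Rightarrow> bool" where
  "newcol Si N i tst 0 = Si 0 i"
| "newcol Si N i tst (Suc 0) = (Si 1 i \<or> tst)"
| "newcol Si N i tst (Suc (Suc l)) =
     ((\<forall>b\<in>N - {i}. Si (Suc l) b) \<and> newcol Si N i tst (Suc l))"

definition T1guard :: "('v \<times> 'v) set \<Rightarrow> nat \<Rightarrow> ('v, 'a) astate \<Rightarrow> 'v \<Rightarrow> bool" where
  "T1guard E dG s i \<longleftrightarrow> \<not> allrow E s i dG \<and> \<not> Md s i"

definition T2guard :: "('v \<times> 'v) set \<Rightarrow> nat \<Rightarrow> ('v, 'a) astate \<Rightarrow> 'v \<Rightarrow> bool" where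
  "T2guard E dG s i \<longleftrightarrow> allrow E s i dG \<and> \<not> Md s i"

text \<open>Task T1 performed by the awake node i, followed by the reception of x_i and
S_i[:, d_i] by the (idle) neighbours.\<close>
definition doT1 ::
  "('v \<times> 'v) set \<Rightarrow> nat \<Rightarrow> ('v \<Rightarrow> real) \<Rightarrow> (('v, 'a) astate \<Rightarrow> 'v \<Rightarrow> 'a)
   \<Rightarrow> ('v, 'a::real_normed_vector) astate \<Rightarrow> 'v \<Rightarrow> ('v, 'a) astate" where
  "doT1 E dG L grad s i =
     (let gr = grad s i;
          tst = (norm gr \<le> eps s i);
          x' = xv s i - (1 / L i) *\<^sub>R gr;
          col = newcol (Sm s i) (Nb E i) i tst
      in s\<lparr> xv := (xv s)(i := x'),
            xc := (\<lambda>k j. if j = i \<and> k \<in> nbrs E i then x' else xc s k j),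
            Sm := (\<lambda>k l c. if c = i \<and> 1 \<le> l \<and> l \<le> dG \<and>
                              (k = i \<or> (k \<in> nbrs E i \<and> \<not> nnu s k i))
                           then col l else Sm s k l c) \<rparr>)"

definition step1 ::
  "('v \<times> 'v) set \<Rightarrow> nat \<Rightarrow> ('v \<Rightarrow> real) \<Rightarrow> (('v, 'a) astate \<Rightarrow> 'v \<Rightarrow> 'a)
   \<Rightarrow> ('v, 'a::real_normed_vector) astate \<Rightarrow> 'v \<Rightarrow> ('v, 'a) astate" where
  "step1 E dG L grad s i = (if T1guard E dG s i then doT1 E dG L grad s i else s)"

text \<open>Task T2 performed by node i, with new (non-decreasing) penalties rE', rI', rho' chosen
by the node, followed by the reception of nu_ij, rho_ij by the neighbours.\<close>
definition doT2 ::
  "('v \<times> 'v) set \<Rightarrow> nat \<Rightarrow> ('v \<Rightarrow> 'a \<Rightarrow> real) \<Rightarrow> ('v \<Rightarrow> 'a \<Rightarrow> real)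
   \<Rightarrow> real \<Rightarrow> real \<Rightarrow> ('v \<Rightarrow> real)
   \<Rightarrow> ('v, 'a::real_vector) astate \<Rightarrow> 'v \<Rightarrow> ('v, 'a) astate" where
  "doT2 E dG h g rE' rI' rho' s i =
     (let nu' = (\<lambda>j. if j \<in> nbrs E i then nu s i j + rho s i j *\<^sub>R (xv s i - xc s i j)
                     else nu s i j);
          rho'' = (\<lambda>j. if j \<in> nbrs E i then rho' j else rho s i j)
      in s\<lparr> nu := (nu s)(i := nu'),
            lam := (lam s)(i := lam s i + rE s i * h i (xv s i)),
            mu := (mu s)(i := max 0 (mu s i + rI s i * g i (xv s i))),
            rE := (rE s)(i := rE'),
            rI := (rI s)(i := rI'),
            rho := (rho s)(i := rho''),
            Md := (Md s)(i := True),
            nur := (\<lambda>k j. if j = i \<and> k \<in> nbrs E i then nu' k else nur s k j),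
            rhor := (\<lambda>k j. if j = i \<and> k \<in> nbrs E i then rho'' k else rhor s k j),
            nnu := (\<lambda>k j. if j = i \<and> k \<in> nbrs E i then True else nnu s k j),
            Sm := (\<lambda>k l c. if k \<in> nbrs E i \<and> l = dG \<and> c \<in> Nb E k then True
                           else Sm s k l c) \<rparr>)"

text \<open>IDLE-mode reset: a node with M_done = 1 that has received a new nu_ji from all its
neighbours sets M_done to 0, S_i to 0, and updates eps_i (to the arbitrary value epsn p).\<close>
definition resetc :: "('v \<times> 'v) set \<Rightarrow> ('v, 'a) astate \<Rightarrow> 'v \<Rightarrow> bool" where
  "resetc E s p \<longleftrightarrow> Md s p \<and> (\<forall>j\<in>nbrs E p. nnu s p j)"

definition doreset :: "('v \<times> 'v) set \<Rightarrow> ('v \<Rightarrow> real) \<Rightarrow> ('v, 'a) astate \<Rightarrow> ('v, 'a) astate" where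
  "doreset E epsn s =
     s\<lparr> Md := (\<lambda>p. if resetc E s p then False else Md s p),
        Sm := (\<lambda>p l c. if resetc E s p then False else Sm s p l c),
        nnu := (\<lambda>p j. if resetc E s p then False else nnu s p j),
        eps := (\<lambda>p. if resetc E s p then epsn p else eps s p) \<rparr>"

definition asymm_step ::
  "('v \<times> 'v) set \<Rightarrow> nat \<Rightarrow> ('v \<Rightarrow> real) \<Rightarrow> ('v \<Rightarrow> 'a \<Rightarrow> 'a) \<Rightarrow> ('v \<Rightarrow> 'a \<Rightarrow> 'a) \<Rightarrow> ('v \<Rightarrow> 'a \<Rightarrow> 'a)
   \<Rightarrow> ('v \<Rightarrow> 'a \<Rightarrow> real) \<Rightarrow> ('v \<Rightarrow> 'a::real_normed_vector \<Rightarrow> real)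
   \<Rightarrow> ('v, 'a) astate \<Rightarrow> 'v \<Rightarrow> ('v, 'a) astate \<Rightarrow> bool" where
  "asymm_step E dG L gf gh gg h g s i s' \<longleftrightarrow>
     (let s1 = step1 E dG L (gradL E gf gh gg h g) s i
      in \<exists>s2. (if T2guard E dG s1 i
               then (\<exists>rE' rI' rho'. rE' \<ge> rE s1 i \<and> rI' \<ge> rI s1 i \<and>
                       (\<forall>j\<in>nbrs E i. rho' j \<ge> rho s1 i j) \<and>
                       s2 = doT2 E dG h g rE' rI' rho' s1 i)
               else s2 = s1)
             \<and> (\<exists>epsn. s' = doreset E epsn s2))"

definition doesT1 :: "('v \<times> 'v) set \<Rightarrow> nat \<Rightarrow> ('v, 'a) astate \<Rightarrow> 'v \<Rightarrow> bool" where
  "doesT1 E dG s i = T1guard E dG s i"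

definition doesT2 ::
  "('v \<times> 'v) set \<Rightarrow> nat \<Rightarrow> ('v \<Rightarrow> real) \<Rightarrow> ('v \<Rightarrow> 'a \<Rightarrow> 'a) \<Rightarrow> ('v \<Rightarrow> 'a \<Rightarrow> 'a) \<Rightarrow> ('v \<Rightarrow> 'a \<Rightarrow> 'a)
   \<Rightarrow> ('v \<Rightarrow> 'a \<Rightarrow> real) \<Rightarrow> ('v \<Rightarrow> 'a::real_normed_vector \<Rightarrow> real)
   \<Rightarrow> ('v, 'a) astate \<Rightarrow> 'v \<Rightarrow> bool" where
  "doesT2 E dG L gf gh gg h g s i =
     T2guard E dG (step1 E dG L (gradL E gf gh gg h g) s i) i"

definition init_ok :: "('v \<times> 'v) set \<Rightarrow> ('v, 'a) astate \<Rightarrow> bool" where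
  "init_ok E s \<longleftrightarrow>
     (\<forall>i l c. \<not> Sm s i l c) \<and> (\<forall>i. \<not> Md s i) \<and> (\<forall>i j. \<not> nnu s i j) \<and>
     (\<forall>i. rE s i > 0 \<and> rI s i > 0) \<and> (\<forall>i j. rho s i j > 0) \<and>
     (\<forall>i j. j \<in> nbrs E i \<longrightarrow> xc s i j = xv s j \<and> nur s i j = nu s j i \<and> rhor s i j = rho s j i)"

end

theory Submission
  imports Defs
begin

lemma gdist_mem:
  assumes "graph_connected E" shows "(i, j) \<in> E ^^ gdist E i j"
proof -
  have "(i,j) \<in> E\<^sup>*" using assms by (simp add: graph_connected_def)
  then obtain k where "(i,j) \<in> E ^^ k" using rtrancl_power by blast
  then show ?thesis unfolding gdist_def by (rule LeastI)
qed

lemma gdist_le: "(i, j) \<in> E ^^ k \<Longrightarrow> gdist E i j \<le> k"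
  unfolding gdist_def by (rule Least_le)

lemma gdist_self: "gdist E i i = 0"
  using gdist_le[where E=E and i=i and j=i and k=0] by simp

lemma gdist_zero: assumes "graph_connected E" "gdist E i j = 0" shows "i = j"
  using gdist_mem[OF assms(1), of i j] assms(2) by simp

lemma gdist_step:
  assumes "graph_connected E" "b \<noteq> i"
  shows "\<exists>n. (i, n) \<in> E \<and> gdist E n b + 1 \<le> gdist E i b"
proof -
  have m: "(i, b) \<in> E ^^ gdist E i b" by (rule gdist_mem[OF assms(1)])
  have "gdist E i b \<noteq> 0" using gdist_zero[OF assms(1)] assms(2) by metis
  then obtain d where d: "gdist E i b = Suc d" by (cases "gdist E i b") auto
  then obtain n where "(i,n) \<in> E" "(n,b) \<in> E ^^ d" using m relpow_Suc_D2 by metis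
  then show ?thesis using gdist_le[where E=E and i=n and j=b and k=d] d by auto
qed

lemma gdist_diam: "gdist E i j \<le> diameter (E::('v::finite \<times> 'v) set)"
proof -
  have "{gdist E i j | i j. True} = (\<lambda>(i,j). gdist E i j) ` UNIV" by auto
  then have "finite {gdist E i j | i j. True}" by simp
  then show ?thesis unfolding diameter_def by (rule Max_ge) auto
qed

lemma diam_pos:
  assumes "graph_connected E" "(i, k) \<in> (E::('v::finite \<times> 'v) set)" "irrefl E"
  shows "1 \<le> diameter E"
proof -
  have "i \<noteq> k" using assms(2,3) by (auto simp: irrefl_def)
  then have "gdist E i k \<noteq> 0" using gdist_zero[OF assms(1)] by metis
  then show ?thesis using gdist_diam[of E i k] by linarith
qed


definition rr :: "('v,'a) astate \<Rightarrow> ('v \<Rightarrow> nat) \<Rightarrow> 'v \<Rightarrow> nat" where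
  "rr s c x = c x - (if Md s x then 1 else 0)"

definition Inv :: "('v::finite \<times> 'v) set \<Rightarrow> ('v,'a) astate \<Rightarrow> ('v \<Rightarrow> nat) \<Rightarrow> ('v \<Rightarrow> nat \<Rightarrow> bool) \<Rightarrow> bool" where
 "Inv E s c dn \<longleftrightarrow>
   (\<forall>x. Md s x \<longrightarrow> 1 \<le> c x) \<and>
   (\<forall>k j. j \<in> nbrs E k \<longrightarrow> rr s c k \<le> c j \<and> c j \<le> rr s c k + 1 \<and> (nnu s k j \<longleftrightarrow> c j = rr s c k + 1)) \<and>
   (\<forall>k l d. d \<in> Nb E k \<longrightarrow> Sm s k l d \<longrightarrow> 1 \<le> l \<and>
      ((\<forall>b. gdist E d b + 1 \<le> l \<longrightarrow> dn b (rr s c k)) \<or> (l = diameter E \<and> (\<exists>m\<in>nbrs E k. nnu s k m)))) \<and>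
   (\<forall>k m. m \<in> nbrs E k \<longrightarrow> nnu s k m \<longrightarrow> (\<forall>x. rr s c k \<le> rr s c x)) \<and>
   (\<forall>b e. dn b e \<longrightarrow> e \<le> rr s c b) \<and>
   (\<forall>x y. c x \<le> c y + 1)"

lemma nbrs_sym: "sym E \<Longrightarrow> i \<in> nbrs E k \<longleftrightarrow> k \<in> nbrs E i"
  by (auto simp: nbrs_def sym_def)

lemma nbrs_ne: "irrefl E \<Longrightarrow> i \<in> nbrs E k \<Longrightarrow> i \<noteq> k"
  by (auto simp: nbrs_def irrefl_def)

lemma newcol_ok:
  assumes conn: "graph_connected E" and irr: "irrefl E"
    and C: "\<And>l n x. l < dG \<Longrightarrow> n \<in> nbrs E i \<Longrightarrow> Sm s i l n \<Longrightarrow> gdist E n x + 1 \<le> l \<Longrightarrow> P x"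
    and Pi: "P i"
    and l: "1 \<le> l" "l \<le> dG" and nc: "newcol (Sm s i) (Nb E i) i tst l"
    and b: "gdist E i b + 1 \<le> l"
  shows "P b"
proof (cases "b = i")
  case True then show ?thesis using Pi by simp
next
  case False
  then obtain n where n: "(i,n) \<in> E" "gdist E n b + 1 \<le> gdist E i b"
    using gdist_step[OF conn] by metis
  have "l \<noteq> Suc 0" using b n by auto
  then obtain l' where l': "l = Suc (Suc l')" using l by (cases l; cases "l - 1") auto
  have nn: "n \<in> Nb E i - {i}" "n \<in> nbrs E i" using n irr by (auto simp: Nb_def nbrs_def irrefl_def)
  have "Sm s i (Suc l') n" using nc nn unfolding l' by simp
  moreover have "Suc l' < dG" using l l' by simp
  ultimately show ?thesis using C[of "Suc l'" n b] nn b n l' by simp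
qed


lemma doT1_fields:
  "Md (doT1 E dG L grad s i) = Md s"
  "nnu (doT1 E dG L grad s i) = nnu s"
  "Sm (doT1 E dG L grad s i) = (\<lambda>k l c. if c = i \<and> 1 \<le> l \<and> l \<le> dG \<and>
                              (k = i \<or> (k \<in> nbrs E i \<and> \<not> nnu s k i))
                           then newcol (Sm s i) (Nb E i) i (norm (grad s i) \<le> eps s i) l else Sm s k l c)"
  by (simp_all add: doT1_def Let_def)

lemma phase1:
  assumes sy: "sym E" and irr: "irrefl E" and conn: "graph_connected E"
    and I: "Inv E s c dn"
  shows "Inv E (step1 E (diameter E) L grad s i) c
           (\<lambda>b e. dn b e \<or> (b = i \<and> T1guard E (diameter E) s i \<and> e = rr s c i))"
proof (cases "T1guard E (diameter E) s i")
  case False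
  then show ?thesis using I by (simp add: step1_def)
next
  case True
  define dG where "dG = diameter E"
  define s1 where "s1 = doT1 E dG L grad s i"
  define dn1 where "dn1 = (\<lambda>b e. dn b e \<or> (b = i \<and> T1guard E (diameter E) s i \<and> e = rr s c i))"
  define col where "col = newcol (Sm s i) (Nb E i) i (norm (grad s i) \<le> eps s i)"
  have st: "step1 E (diameter E) L grad s i = s1" using True by (simp add: step1_def s1_def dG_def)
  have rr1: "rr s1 c = rr s c" by (simp add: rr_def s1_def doT1_fields fun_eq_iff)
  have Md1: "Md s1 = Md s" and nnu1: "nnu s1 = nnu s" by (simp_all add: s1_def doT1_fields)
  have Sm1: "Sm s1 = (\<lambda>k l d. if d = i \<and> 1 \<le> l \<and> l \<le> dG \<and>
                              (k = i \<or> (k \<in> nbrs E i \<and> \<not> nnu s k i)) then col l else Sm s k l d)"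
    by (simp add: s1_def doT1_fields col_def)
  have notMd: "\<not> Md s i" using True by (simp add: T1guard_def)
  have dni: "dn1 i (rr s c i)" using True by (simp add: dn1_def)
  have I3: "\<And>k l d. d \<in> Nb E k \<Longrightarrow> Sm s k l d \<Longrightarrow> 1 \<le> l \<and>
      ((\<forall>b. gdist E d b + 1 \<le> l \<longrightarrow> dn b (rr s c k)) \<or> (l = dG \<and> (\<exists>m\<in>nbrs E k. nnu s k m)))"
    using I unfolding Inv_def dG_def by blast
  have colok: "\<And>l b. 1 \<le> l \<Longrightarrow> l \<le> dG \<Longrightarrow> col l \<Longrightarrow> gdist E i b + 1 \<le> l \<Longrightarrow> dn1 b (rr s c i)"
  proof -
    fix l b assume a: "1 \<le> l" "l \<le> dG" "col l" "gdist E i b + 1 \<le> l"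
    show "dn1 b (rr s c i)"
    proof (rule newcol_ok[OF conn irr, where P="\<lambda>b. dn1 b (rr s c i)" and dG=dG and s=s and l=l and tst="norm (grad s i) \<le> eps s i"])
      fix l n x assume b: "l < dG" "n \<in> nbrs E i" "Sm s i l n" "gdist E n x + 1 \<le> l"
      have "n \<in> Nb E i" using b(2) by (simp add: Nb_def)
      from I3[OF this b(3)] b(1,4) show "dn1 x (rr s c i)" by (auto simp: dn1_def)
    qed (use a dni col_def in auto)
  qed
  have B: "\<And>k j. j \<in> nbrs E k \<Longrightarrow> rr s c k \<le> c j \<and> c j \<le> rr s c k + 1 \<and> (nnu s k j \<longleftrightarrow> c j = rr s c k + 1)"
    using I unfolding Inv_def by blast
  have same: "\<And>k. k \<in> nbrs E i \<Longrightarrow> \<not> nnu s k i \<Longrightarrow> rr s c k = rr s c i"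
  proof -
    fix k assume k: "k \<in> nbrs E i" "\<not> nnu s k i"
    have "i \<in> nbrs E k" using k nbrs_sym[OF sy] by blast
    from B[OF this] k(2) have "c i = rr s c k" by auto
    moreover have "rr s c i = c i" using notMd by (simp add: rr_def)
    ultimately show "rr s c k = rr s c i" by simp
  qed
  have "Inv E s1 c dn1"
    unfolding Inv_def
  proof (intro conjI)
    show "\<forall>x. Md s1 x \<longrightarrow> 1 \<le> c x" using I by (simp add: Inv_def Md1)
    show "\<forall>k j. j \<in> nbrs E k \<longrightarrow> rr s1 c k \<le> c j \<and> c j \<le> rr s1 c k + 1 \<and> (nnu s1 k j \<longleftrightarrow> c j = rr s1 c k + 1)"
      using B by (simp add: rr1 nnu1)
    show "\<forall>k m. m \<in> nbrs E k \<longrightarrow> nnu s1 k m \<longrightarrow> (\<forall>x. rr s1 c k \<le> rr s1 c x)"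
      using I by (simp add: Inv_def rr1 nnu1)
    show "\<forall>x y. c x \<le> c y + 1" using I by (simp add: Inv_def)
    show "\<forall>b e. dn1 b e \<longrightarrow> e \<le> rr s1 c b" using I by (auto simp: Inv_def rr1 dn1_def)
    show "\<forall>k l d. d \<in> Nb E k \<longrightarrow> Sm s1 k l d \<longrightarrow> 1 \<le> l \<and>
      ((\<forall>b. gdist E d b + 1 \<le> l \<longrightarrow> dn1 b (rr s1 c k)) \<or> (l = diameter E \<and> (\<exists>m\<in>nbrs E k. nnu s1 k m)))"
    proof (intro allI impI)
      fix k l d assume d: "d \<in> Nb E k" and S: "Sm s1 k l d"
      show "1 \<le> l \<and> ((\<forall>b. gdist E d b + 1 \<le> l \<longrightarrow> dn1 b (rr s1 c k)) \<or> (l = diameter E \<and> (\<exists>m\<in>nbrs E k. nnu s1 k m)))"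
      proof (cases "d = i \<and> 1 \<le> l \<and> l \<le> dG \<and> (k = i \<or> (k \<in> nbrs E i \<and> \<not> nnu s k i))")
        case True
        then have "col l" using S by (simp add: Sm1)
        moreover have "rr s c k = rr s c i" using True same by auto
        ultimately show ?thesis using True colok[of l] by (simp add: rr1)
      next
        case False
        then have "Sm s k l d" using S by (simp add: Sm1)
        from I3[OF d this] show ?thesis by (auto simp: rr1 nnu1 dn1_def dG_def)
      qed
    qed
  qed
  then show ?thesis by (simp add: st dn1_def)
qed


lemma guard:
  assumes conn: "graph_connected E" and irr: "irrefl E" and I: "Inv E s c dn"
    and al: "allrow E s i (diameter E)"
  shows "rr s c i \<le> rr s c x"
proof (cases "\<exists>m\<in>nbrs E i. nnu s i m")
  case True
  then show ?thesis using I by (auto simp: Inv_def)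
next
  case False
  show ?thesis
  proof (cases "x = i")
    case True then show ?thesis by simp
  next
    case ne: False
    then obtain n where n: "(i,n) \<in> E" "gdist E n x + 1 \<le> gdist E i x"
      using gdist_step[OF conn] by metis
    have nN: "n \<in> Nb E i" using n by (simp add: Nb_def nbrs_def)
    then have "Sm s i (diameter E) n" using al by (simp add: allrow_def)
    moreover have "gdist E n x + 1 \<le> diameter E" using n gdist_diam[of E i x] by simp
    ultimately have "dn x (rr s c i)" using I nN False unfolding Inv_def by blast
    then show ?thesis using I by (simp add: Inv_def)
  qed
qed

lemma doT2_fields:
  "Md (doT2 E dG h g rE' rI' rho' s i) = (Md s)(i := True)"
  "nnu (doT2 E dG h g rE' rI' rho' s i) = (\<lambda>k j. if j = i \<and> k \<in> nbrs E i then True else nnu s k j)"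
  "Sm (doT2 E dG h g rE' rI' rho' s i) = (\<lambda>k l c. if k \<in> nbrs E i \<and> l = dG \<and> c \<in> Nb E k then True
                           else Sm s k l c)"
  by (simp_all add: doT2_def Let_def)

lemma phase2:
  assumes sy: "sym E" and irr: "irrefl E" and conn: "graph_connected E"
    and I: "Inv E s c dn" and G: "T2guard E (diameter E) s i"
  shows "Inv E (doT2 E (diameter E) h g rE' rI' rho' s i) (c(i := c i + 1)) dn"
proof -
  define s2 where "s2 = doT2 E (diameter E) h g rE' rI' rho' s i"
  define c2 where "c2 = c(i := c i + 1)"
  have notMd: "\<not> Md s i" and al: "allrow E s i (diameter E)" using G by (auto simp: T2guard_def)
  have gd: "\<And>x. rr s c i \<le> rr s c x" using guard[OF conn irr I al] .
  have rri: "rr s c i = c i" using notMd by (simp add: rr_def)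
  have rr2: "rr s2 c2 = rr s c" using notMd by (auto simp: rr_def s2_def c2_def doT2_fields fun_eq_iff)
  have B: "\<And>k j. j \<in> nbrs E k \<Longrightarrow> rr s c k \<le> c j \<and> c j \<le> rr s c k + 1 \<and> (nnu s k j \<longleftrightarrow> c j = rr s c k + 1)"
    using I unfolding Inv_def by blast
  have le_rr: "\<And>x. rr s c x \<le> c x" by (simp add: rr_def)
  have "Inv E s2 c2 dn"
    unfolding Inv_def
  proof (intro conjI)
    show "\<forall>x. Md s2 x \<longrightarrow> 1 \<le> c2 x" using I by (simp add: Inv_def s2_def c2_def doT2_fields)
    show "\<forall>k j. j \<in> nbrs E k \<longrightarrow> rr s2 c2 k \<le> c2 j \<and> c2 j \<le> rr s2 c2 k + 1 \<and> (nnu s2 k j \<longleftrightarrow> c2 j = rr s2 c2 k + 1)"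
    proof (intro allI impI)
      fix k j assume j: "j \<in> nbrs E k"
      show "rr s2 c2 k \<le> c2 j \<and> c2 j \<le> rr s2 c2 k + 1 \<and> (nnu s2 k j \<longleftrightarrow> c2 j = rr s2 c2 k + 1)"
      proof (cases "j = i")
        case True
        have "k \<in> nbrs E i" using j True nbrs_sym[OF sy] by blast
        moreover have "c i = rr s c k" using B[OF j] True gd[of k] rri by simp
        moreover have "nnu s2 k i" "c2 i = c i + 1" using calculation by (simp_all add: s2_def c2_def doT2_fields)
        ultimately show ?thesis using True by (simp add: rr2)
      next
        case False
        then have "nnu s2 k j = nnu s k j" "c2 j = c j" by (simp_all add: s2_def c2_def doT2_fields)
        then show ?thesis using B[OF j] by (simp add: rr2)
      qed
    qed
    show "\<forall>k m. m \<in> nbrs E k \<longrightarrow> nnu s2 k m \<longrightarrow> (\<forall>x. rr s2 c2 k \<le> rr s2 c2 x)"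
    proof (intro allI impI)
      fix k m x assume m: "m \<in> nbrs E k" and n: "nnu s2 k m"
      show "rr s2 c2 k \<le> rr s2 c2 x"
      proof (cases "m = i \<and> k \<in> nbrs E i")
        case True
        have "c i = rr s c k" using B[OF m] True gd[of k] rri by simp
        then show ?thesis using gd[of x] rri by (simp add: rr2)
      next
        case False
        then have "nnu s k m" using n by (simp add: s2_def doT2_fields)
        then show ?thesis using I m by (simp add: Inv_def rr2)
      qed
    qed
    show "\<forall>b e. dn b e \<longrightarrow> e \<le> rr s2 c2 b" using I by (simp add: Inv_def rr2)
    show "\<forall>x y. c2 x \<le> c2 y + 1"
    proof (intro allI)
      fix x y
      have F: "c x \<le> c y + 1" using I by (simp add: Inv_def)
      have ci: "c i \<le> c y" using gd[of y] le_rr[of y] rri by simp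
      show "c2 x \<le> c2 y + 1" using F ci by (cases "y = i"; cases "x = i") (auto simp: c2_def)
    qed
    show "\<forall>k l d. d \<in> Nb E k \<longrightarrow> Sm s2 k l d \<longrightarrow> 1 \<le> l \<and>
      ((\<forall>b. gdist E d b + 1 \<le> l \<longrightarrow> dn b (rr s2 c2 k)) \<or> (l = diameter E \<and> (\<exists>m\<in>nbrs E k. nnu s2 k m)))"
    proof (intro allI impI)
      fix k l d assume d: "d \<in> Nb E k" and S: "Sm s2 k l d"
      show "1 \<le> l \<and> ((\<forall>b. gdist E d b + 1 \<le> l \<longrightarrow> dn b (rr s2 c2 k)) \<or> (l = diameter E \<and> (\<exists>m\<in>nbrs E k. nnu s2 k m)))"
      proof (cases "k \<in> nbrs E i \<and> l = diameter E")
        case True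
        have "(i, k) \<in> E" using True by (simp add: nbrs_def)
        then have "1 \<le> diameter E" using diam_pos[OF conn _ irr] by blast
        moreover have "i \<in> nbrs E k" using True nbrs_sym[OF sy] by blast
        moreover have "nnu s2 k i" using True by (simp add: s2_def doT2_fields)
        ultimately show ?thesis using True by blast
      next
        case False
        then have "Sm s k l d" using S d by (auto simp: s2_def doT2_fields)
        then have "1 \<le> l \<and> ((\<forall>b. gdist E d b + 1 \<le> l \<longrightarrow> dn b (rr s c k)) \<or> (l = diameter E \<and> (\<exists>m\<in>nbrs E k. nnu s k m)))"
          using I d unfolding Inv_def by blast
        moreover have "\<And>m. nnu s k m \<Longrightarrow> nnu s2 k m" by (simp add: s2_def doT2_fields)
        ultimately show ?thesis by (auto simp: rr2)
      qed
    qed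
  qed
  then show ?thesis by (simp add: s2_def c2_def)
qed

lemma phase3:
  assumes I: "Inv E s c dn"
  shows "Inv E (doreset E epsn s) c dn"
proof -
  define s3 where "s3 = doreset E epsn s"
  have Md3: "Md s3 = (\<lambda>p. if resetc E s p then False else Md s p)"
   and Sm3: "Sm s3 = (\<lambda>p l c. if resetc E s p then False else Sm s p l c)"
   and nnu3: "nnu s3 = (\<lambda>p j. if resetc E s p then False else nnu s p j)"
    by (simp_all add: s3_def doreset_def)
  have A: "\<And>x. Md s x \<Longrightarrow> 1 \<le> c x" using I by (simp add: Inv_def)
  have rr3: "\<And>p. rr s3 c p = (if resetc E s p then rr s c p + 1 else rr s c p)"
  proof -
    fix p show "rr s3 c p = (if resetc E s p then rr s c p + 1 else rr s c p)"
    proof (cases "resetc E s p")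
      case True
      then have "Md s p" by (simp add: resetc_def)
      then have "1 \<le> c p" by (rule A)
      then show ?thesis using True \<open>Md s p\<close> by (simp add: rr_def Md3)
    qed (simp add: rr_def Md3)
  qed
  have mono: "\<And>p. rr s c p \<le> rr s3 c p" using rr3 by simp
  have B: "\<And>k j. j \<in> nbrs E k \<Longrightarrow> rr s c k \<le> c j \<and> c j \<le> rr s c k + 1 \<and> (nnu s k j \<longleftrightarrow> c j = rr s c k + 1)"
    using I unfolding Inv_def by blast
  have "Inv E s3 c dn"
    unfolding Inv_def
  proof (intro conjI)
    show "\<forall>x. Md s3 x \<longrightarrow> 1 \<le> c x" using A by (simp add: Md3)
    show "\<forall>k j. j \<in> nbrs E k \<longrightarrow> rr s3 c k \<le> c j \<and> c j \<le> rr s3 c k + 1 \<and> (nnu s3 k j \<longleftrightarrow> c j = rr s3 c k + 1)"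
    proof (intro allI impI)
      fix k j assume j: "j \<in> nbrs E k"
      show "rr s3 c k \<le> c j \<and> c j \<le> rr s3 c k + 1 \<and> (nnu s3 k j \<longleftrightarrow> c j = rr s3 c k + 1)"
      proof (cases "resetc E s k")
        case True
        then have "nnu s k j" using j by (simp add: resetc_def)
        then show ?thesis using B[OF j] True by (simp add: rr3 nnu3)
      next
        case False
        then show ?thesis using B[OF j] by (simp add: rr3 nnu3)
      qed
    qed
    show "\<forall>k m. m \<in> nbrs E k \<longrightarrow> nnu s3 k m \<longrightarrow> (\<forall>x. rr s3 c k \<le> rr s3 c x)"
    proof (intro allI impI)
      fix k m x assume m: "m \<in> nbrs E k" and n: "nnu s3 k m"
      have nr: "\<not> resetc E s k" and "nnu s k m" using n by (auto simp: nnu3 split: if_splits)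
      then have "rr s c k \<le> rr s c x" using I m by (simp add: Inv_def)
      then show "rr s3 c k \<le> rr s3 c x" using nr mono[of x] by (simp add: rr3)
    qed
    have E5: "\<forall>b e. dn b e \<longrightarrow> e \<le> rr s c b" using I by (simp add: Inv_def)
    show "\<forall>b e. dn b e \<longrightarrow> e \<le> rr s3 c b" using E5 mono le_trans by blast
    show "\<forall>x y. c x \<le> c y + 1" using I by (simp add: Inv_def)
    show "\<forall>k l d. d \<in> Nb E k \<longrightarrow> Sm s3 k l d \<longrightarrow> 1 \<le> l \<and>
      ((\<forall>b. gdist E d b + 1 \<le> l \<longrightarrow> dn b (rr s3 c k)) \<or> (l = diameter E \<and> (\<exists>m\<in>nbrs E k. nnu s3 k m)))"
    proof (intro allI impI)
      fix k l d assume d: "d \<in> Nb E k" and S: "Sm s3 k l d"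
      then have nr: "\<not> resetc E s k" and "Sm s k l d" by (auto simp: Sm3 split: if_splits)
      then have "1 \<le> l \<and> ((\<forall>b. gdist E d b + 1 \<le> l \<longrightarrow> dn b (rr s c k)) \<or> (l = diameter E \<and> (\<exists>m\<in>nbrs E k. nnu s k m)))"
        using I d unfolding Inv_def by blast
      then show "1 \<le> l \<and> ((\<forall>b. gdist E d b + 1 \<le> l \<longrightarrow> dn b (rr s3 c k)) \<or> (l = diameter E \<and> (\<exists>m\<in>nbrs E k. nnu s3 k m)))"
        using nr by (simp add: rr3 nnu3)
    qed
  qed
  then show ?thesis by (simp add: s3_def)
qed


lemma step_inv:
  assumes sy: "sym E" and irr: "irrefl E" and conn: "graph_connected E"
    and I: "Inv E s c dn"
    and st: "asymm_step E (diameter E) L gf gh gg h g s i s'"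
  shows "Inv E s' (\<lambda>x. c x + (if x = i then (if doesT2 E (diameter E) L gf gh gg h g s i then 1 else 0) else 0))
           (\<lambda>b e. dn b e \<or> (b = i \<and> T1guard E (diameter E) s i \<and> e = rr s c i))"
proof -
  define s1 where "s1 = step1 E (diameter E) L (gradL E gf gh gg h g) s i"
  define dn1 where "dn1 = (\<lambda>b e. dn b e \<or> (b = i \<and> T1guard E (diameter E) s i \<and> e = rr s c i))"
  have I1: "Inv E s1 c dn1" unfolding s1_def dn1_def by (rule phase1[OF sy irr conn I])
  obtain s2 epsn where s2: "if T2guard E (diameter E) s1 i
               then (\<exists>rE' rI' rho'. s2 = doT2 E (diameter E) h g rE' rI' rho' s1 i)
               else s2 = s1" and s': "s' = doreset E epsn s2"
  proof -
    from st obtain s2 epsn where a: "if T2guard E (diameter E) s1 i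
               then (\<exists>rE' rI' rho'. rE' \<ge> rE s1 i \<and> rI' \<ge> rI s1 i \<and>
                       (\<forall>j\<in>nbrs E i. rho' j \<ge> rho s1 i j) \<and>
                       s2 = doT2 E (diameter E) h g rE' rI' rho' s1 i)
               else s2 = s1" and b: "s' = doreset E epsn s2"
      unfolding asymm_step_def Let_def s1_def by blast
    from a have "if T2guard E (diameter E) s1 i
               then (\<exists>rE' rI' rho'. s2 = doT2 E (diameter E) h g rE' rI' rho' s1 i)
               else s2 = s1" by (auto split: if_splits)
    with b that show ?thesis by blast
  qed
  show ?thesis
  proof (cases "T2guard E (diameter E) s1 i")
    case True
    then obtain rE' rI' rho' where "s2 = doT2 E (diameter E) h g rE' rI' rho' s1 i" using s2 by auto
    then have "Inv E s2 (c(i := c i + 1)) dn1" using phase2[OF sy irr conn I1 True] by simp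
    then have "Inv E s' (c(i := c i + 1)) dn1" using phase3 s' by simp
    moreover have "c(i := c i + 1) = (\<lambda>x. c x + (if x = i then (if doesT2 E (diameter E) L gf gh gg h g s i then 1 else 0) else 0))"
      using True by (auto simp: doesT2_def s1_def)
    ultimately show ?thesis by (simp add: dn1_def)
  next
    case False
    then have "s2 = s1" using s2 by simp
    then have "Inv E s' c dn1" using phase3 s' I1 by simp
    moreover have "c = (\<lambda>x. c x + (if x = i then (if doesT2 E (diameter E) L gf gh gg h g s i then 1 else 0) else 0))"
      using False by (auto simp: doesT2_def s1_def)
    ultimately show ?thesis by (simp add: dn1_def)
  qed
qed

lemma card_less_Suc:
  "card {t'. t' < Suc t \<and> P t'} = card {t'. t' < t \<and> P t'} + (if P t then 1 else 0)"
proof -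
  have f: "finite {t'. t' < t \<and> P t'}" by simp
  show ?thesis
  proof (cases "P t")
    case True
    then have "{t'. t' < Suc t \<and> P t'} = insert t {t'. t' < t \<and> P t'}" by auto
    then show ?thesis using True f by simp
  next
    case False
    then have "{t'. t' < Suc t \<and> P t'} = {t'. t' < t \<and> P t'}" using less_Suc_eq by auto
    then show ?thesis using False by simp
  qed
qed

lemma balance:
  fixes c :: "'v::finite \<Rightarrow> nat"
  assumes F: "\<And>x y. c x \<le> c y + 1" and S: "(\<Sum>x\<in>UNIV. c x) = k * CARD('v)"
  shows "c x = k"
proof (rule ccontr)
  assume ne: "c x \<noteq> k"
  show False
  proof (cases "c x > k")
    case True
    have ge: "\<forall>y\<in>UNIV. k \<le> c y" using F[of x] True by (metis Suc_eq_plus1 add_le_cancel_right le_trans less_eq_Suc_le)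
    have "(\<Sum>y\<in>(UNIV::'v set). k) < (\<Sum>y\<in>UNIV. c y)"
      by (rule sum_strict_mono_ex1[of "UNIV::'v set" "\<lambda>y. k" c]) (use ge True in auto)
    then show False using S by simp
  next
    case False
    then have lt: "c x < k" using ne by simp
    have le: "\<forall>y\<in>UNIV. c y \<le> k" using F lt by (metis Suc_eq_plus1 less_eq_Suc_le le_trans)
    have "(\<Sum>y\<in>UNIV. c y) < (\<Sum>y\<in>(UNIV::'v set). k)"
      by (rule sum_strict_mono_ex1[of "UNIV::'v set" c "\<lambda>y. k"]) (use le lt in auto)
    then show False using S by simp
  qed
qed


lemma allrow_dn:
  assumes conn: "graph_connected E" and I: "Inv E s c dn"
    and al: "allrow E s i (diameter E)" and no: "\<not> (\<exists>m\<in>nbrs E i. nnu s i m)"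
  shows "dn x (rr s c i)"
proof -
  have C: "\<And>k l d. d \<in> Nb E k \<Longrightarrow> Sm s k l d \<Longrightarrow> 1 \<le> l \<and>
      ((\<forall>b. gdist E d b + 1 \<le> l \<longrightarrow> dn b (rr s c k)) \<or> (l = diameter E \<and> (\<exists>m\<in>nbrs E k. nnu s k m)))"
    using I unfolding Inv_def by blast
  show ?thesis
  proof (cases "x = i")
    case True
    have iN: "i \<in> Nb E i" by (simp add: Nb_def)
    then have "Sm s i (diameter E) i" using al by (simp add: allrow_def)
    from C[OF iN this] no True show ?thesis by (simp add: gdist_self)
  next
    case ne: False
    then obtain n where n: "(i,n) \<in> E" "gdist E n x + 1 \<le> gdist E i x"
      using gdist_step[OF conn] by metis
    have nN: "n \<in> Nb E i" using n by (simp add: Nb_def nbrs_def)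
    then have "Sm s i (diameter E) n" using al by (simp add: allrow_def)
    moreover have "gdist E n x + 1 \<le> diameter E" using n gdist_diam[of E i x] by simp
    ultimately show "dn x (rr s c i)" using C[OF nN] no by blast
  qed
qed

theorem lemma4:
  fixes E :: "('v::finite \<times> 'v) set"
    and f h g :: "'v \<Rightarrow> 'a::euclidean_space \<Rightarrow> real"
    and gf gh gg :: "'v \<Rightarrow> 'a \<Rightarrow> 'a"
    and L Tbar :: "'v \<Rightarrow> real"
    and st :: "nat \<Rightarrow> ('v, 'a) astate"
    and awake :: "nat \<Rightarrow> 'v"
    and \<tau> :: "nat \<Rightarrow> real"
  assumes graph: "undirected_graph E" and conn: "graph_connected E"
    and df: "\<And>i x. (f i has_derivative (\<lambda>v. gf i x \<bullet> v)) (at x)"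
    and dh: "\<And>i x. (h i has_derivative (\<lambda>v. gh i x \<bullet> v)) (at x)"
    and dg: "\<And>i x. (g i has_derivative (\<lambda>v. gg i x \<bullet> v)) (at x)"
    and Lpos: "\<And>i. L i > 0"
    and Tpos: "\<And>i. Tbar i > 0"
    and times: "strict_mono \<tau>"
    and first_wake: "\<And>i. \<exists>t. awake t = i"
    and waiting: "\<And>i t. awake t = i \<Longrightarrow>
                    \<exists>t'>t. awake t' = i \<and> \<tau> t' \<le> \<tau> t + Tbar i"
    and init: "init_ok E (st 0)"
    and run: "\<And>t. asymm_step E (diameter E) L gf gh gg h g (st t) (awake t) (st (Suc t))"
    and ta: "doesT2 E (diameter E) L gf gh gg h g (st ta) (awake ta)"
    and ta_idx: "card {t. t < ta \<and> doesT2 E (diameter E) L gf gh gg h g (st t) (awake t)}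
                   = k * CARD('v)"
    and tb: "doesT2 E (diameter E) L gf gh gg h g (st tb) (awake tb)"
    and tb_idx: "card {t. t < tb \<and> doesT2 E (diameter E) L gf gh gg h g (st t) (awake t)}
                   = (k + 1) * CARD('v)"
  shows "\<forall>i. \<exists>t. ta \<le> t \<and> t \<le> tb \<and> awake t = i \<and> doesT1 E (diameter E) (st t) i"
proof
  fix b
  have sy: "sym E" and irr: "irrefl E" using graph by (auto simp: undirected_graph_def)
  define D where "D t = doesT2 E (diameter E) L gf gh gg h g (st t) (awake t)" for t
  define cnt where "cnt t x = card {t'. t' < t \<and> awake t' = x \<and> D t'}" for t x
  define dn where "dn t b e = (\<exists>t'<t. awake t' = b \<and> T1guard E (diameter E) (st t') b \<and> e = rr (st t') (cnt t') b)" for t b e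
  have cntS: "cnt (Suc t) = (\<lambda>x. cnt t x + (if x = awake t then (if D t then 1 else 0) else 0))" for t
  proof
    fix x
    show "cnt (Suc t) x = cnt t x + (if x = awake t then (if D t then 1 else 0) else 0)"
      unfolding cnt_def using card_less_Suc[of t "\<lambda>t'. awake t' = x \<and> D t'"] by auto
  qed
  have dnS: "dn (Suc t) = (\<lambda>b e. dn t b e \<or> (b = awake t \<and> T1guard E (diameter E) (st t) (awake t) \<and> e = rr (st t) (cnt t) (awake t)))" for t
    unfolding dn_def by (auto simp: fun_eq_iff less_Suc_eq)
  have inv: "Inv E (st t) (cnt t) (dn t)" for t
  proof (induction t)
    case 0
    have "cnt 0 = (\<lambda>_. 0)" "dn 0 = (\<lambda>_ _. False)" by (auto simp: cnt_def dn_def fun_eq_iff)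
    then show ?case using init by (simp add: Inv_def init_ok_def rr_def)
  next
    case (Suc t)
    show ?case unfolding cntS dnS D_def by (rule step_inv[OF sy irr conn Suc run[of t]])
  qed
  have total: "(\<Sum>x\<in>UNIV. cnt t x) = card {t'. t' < t \<and> D t'}" for t
  proof (induction t)
    case 0 then show ?case by (simp add: cnt_def)
  next
    case (Suc t)
    have "(\<Sum>x\<in>UNIV. cnt (Suc t) x) = (\<Sum>x\<in>UNIV. cnt t x) + (\<Sum>x\<in>UNIV. (if x = awake t then (if D t then 1 else 0) else 0))"
      by (simp add: cntS sum.distrib)
    also have "\<dots> = card {t'. t' < t \<and> D t'} + (if D t then 1 else 0)" using Suc by simp
    also have "\<dots> = card {t'. t' < Suc t \<and> D t'}" using card_less_Suc[of t D] by simp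
    finally show ?case .
  qed
  have Fc: "\<And>t x y. cnt t x \<le> cnt t y + 1" using inv by (simp add: Inv_def)
  have cta: "cnt ta x = k" for x
    by (rule balance[OF Fc]) (use total[of ta] ta_idx in \<open>simp add: D_def\<close>)
  have ctb: "cnt tb x = k + 1" for x
    by (rule balance[OF Fc]) (use total[of tb] tb_idx in \<open>simp add: D_def\<close>)
  define a where "a = awake tb"
  define s1 where "s1 = step1 E (diameter E) L (gradL E gf gh gg h g) (st tb) a"
  have I1: "Inv E s1 (cnt tb) (dn (Suc tb))"
    unfolding s1_def dnS a_def by (rule phase1[OF sy irr conn inv])
  have G: "T2guard E (diameter E) s1 a" using tb by (simp add: doesT2_def s1_def a_def)
  have Md1: "Md s1 = Md (st tb)" by (simp add: s1_def step1_def doT1_fields)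
  have nMd: "\<not> Md s1 a" and al: "allrow E s1 a (diameter E)" using G by (auto simp: T2guard_def)
  have rra: "rr s1 (cnt tb) a = k + 1" using nMd ctb by (simp add: rr_def)
  have no: "\<not> (\<exists>m\<in>nbrs E a. nnu s1 a m)"
  proof
    assume "\<exists>m\<in>nbrs E a. nnu s1 a m"
    then obtain m where m: "m \<in> nbrs E a" "nnu s1 a m" by blast
    then have "cnt tb m = rr s1 (cnt tb) a + 1" using I1 by (simp add: Inv_def)
    then show False using rra ctb[of m] by simp
  qed
  have "dn (Suc tb) b (k + 1)" using allrow_dn[OF conn I1 al no] rra by simp
  then obtain t' where t': "t' < Suc tb" "awake t' = b" "T1guard E (diameter E) (st t') b"
      "k + 1 = rr (st t') (cnt t') b"
    unfolding dn_def by blast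
  have "ta \<le> t'"
  proof (rule ccontr)
    assume "\<not> ta \<le> t'"
    then have "t' < ta" by simp
    then have "dn ta b (k + 1)" using t' unfolding dn_def by blast
    then have "k + 1 \<le> rr (st ta) (cnt ta) b" using inv[of ta] by (simp add: Inv_def)
    moreover have "rr (st ta) (cnt ta) b \<le> cnt ta b" by (simp add: rr_def)
    ultimately show False using cta[of b] by simp
  qed
  then show "\<exists>t. ta \<le> t \<and> t \<le> tb \<and> awake t = b \<and> doesT1 E (diameter E) (st t) b"
    using t' by (auto simp: doesT1_def)
qed

end
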